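(* Let $\mathcal{H}$ be a complex separable Hilbert space and $A\in\mathcal{B}(\mathcal{H})$ with an orthonormal basis $\{e_j\}_{j\in J}$ of eigenvectors, $Ae_j=-\lambda_je_j$, where $\lambda_j\in\mathbb{C}_+$ for all $j$. Let $I$ be a countable index set and $g^i\in\mathcal{H}$ for $i\in I$. Let $B:=(I_{\mathcal{H}}+A)(I_{\mathcal{H}}-A)^{-1}\in\mathcal{B}(\mathcal{H})$, i.e. $Be_j=\mathfrak{h}(\lambda_j)e_j$, and let $a^i\in\mathcal{H}$ be defined by $\langle a^i,e_j\rangle=\frac{\sqrt2}{1+\lambda_j}\langle g^i,e_j\rangle$ for all $j$ (equivalently $a^i=\sqrt2(I_{\mathcal{H}}-A)^{-1}g^i$). Then $\{e^{tA}g^i\}_{i\in I,\,t\in[0,\infty)}$ is a semi-continuous frame for $\mathcal{H}$ if and only if $\{B^na^i\}_{i\in I,\,n\in\mathbb{N}\cup\{0\}}$ is a frame for $\mathcal{H}$.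
   Context: $\mathbb{C}_+=\{z:\mathrm{Re}\,z>0\}$, $\mathbb{D}=\{z:|z|<1\}$, and $\mathfrak{h}:\mathbb{D}\to\mathbb{C}_+$ (also $\mathbb{C}_+\to\mathbb{D}$), $\mathfrak{h}(z)=\frac{1-z}{1+z}$; $I_{\mathcal{H}}$ denotes the identity operator. $e^{tA}:=\sum_{n\ge0}\frac{t^n}{n!}A^n$. A countable family $\{f_k\}\subset\mathcal{H}$ is a frame if there are $c,C>0$ with $c\|f\|^2\le\sum_k|\langle f,f_k\rangle|^2\le C\|f\|^2$ for all $f\in\mathcal{H}$. For a countable $\mathcal{G}\subset\mathcal{H}$ and an interval $\mathcal{T}\subset[0,\infty)$, $\{e^{tA}g\}_{g\in\mathcal{G},t\in\mathcal{T}}$ is a semi-continuous frame for $\mathcal{H}$ if there are constants $c,C>0$ such that $c\|f\|^2\le\sum_{g\in\mathcal{G}}\int_{\mathcal{T}}|\langle f,e^{tA}g\rangle|^2\,dt\le C\|f\|^2$ for all $f\in\mathcal{H}$. *)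

theory Defs
  imports "HOL-Analysis.Analysis"
begin

(* The separable Hilbert space H with orthonormal eigenbasis {e_j}_{j in J} is modelled
   in coordinates w.r.t. that basis: H = l^2(J), vectors are functions 'j => complex
   vanishing off J with square-summable modulus; e_j is the j-th unit vector. *)

definition l2 :: "'j set \<Rightarrow> ('j \<Rightarrow> complex) set" where
  "l2 J = {f. (\<forall>j. j \<notin> J \<longrightarrow> f j = 0) \<and> (\<lambda>j. (cmod (f j))^2) summable_on J}"

definition l2_inner :: "'j set \<Rightarrow> ('j \<Rightarrow> complex) \<Rightarrow> ('j \<Rightarrow> complex) \<Rightarrow> complex" where
  "l2_inner J f g = (\<Sum>\<^sub>\<infinity>j\<in>J. f j * cnj (g j))"

definition l2_normsq :: "'j set \<Rightarrow> ('j \<Rightarrow> complex) \<Rightarrow> real" where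
  "l2_normsq J f = (\<Sum>\<^sub>\<infinity>j\<in>J. (cmod (f j))^2)"

definition hmap :: "complex \<Rightarrow> complex" where
  "hmap z = (1 - z) / (1 + z)"

(* A e_j = - lam j e_j; e^{tA} = sum_n t^n/n! A^n, which acts on the j-th coordinate
   by the scalar series sum_n t^n/n! (-lam j)^n *)
definition expA :: "('j \<Rightarrow> complex) \<Rightarrow> real \<Rightarrow> ('j \<Rightarrow> complex) \<Rightarrow> ('j \<Rightarrow> complex)" where
  "expA lam t g = (\<lambda>j. (\<Sum>n. (complex_of_real t ^ n / of_nat (fact n)) * (- lam j) ^ n) * g j)"

(* B e_j = h(lam j) e_j, so B^n acts on coordinate j by h(lam j)^n *)
definition Bpow :: "('j \<Rightarrow> complex) \<Rightarrow> nat \<Rightarrow> ('j \<Rightarrow> complex) \<Rightarrow> ('j \<Rightarrow> complex)" where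
  "Bpow lam n f = (\<lambda>j. hmap (lam j) ^ n * f j)"

definition avec :: "('j \<Rightarrow> complex) \<Rightarrow> ('j \<Rightarrow> complex) \<Rightarrow> ('j \<Rightarrow> complex)" where
  "avec lam g = (\<lambda>j. (complex_of_real (sqrt 2) / (1 + lam j)) * g j)"

definition is_frame :: "'j set \<Rightarrow> 'k set \<Rightarrow> ('k \<Rightarrow> 'j \<Rightarrow> complex) \<Rightarrow> bool" where
  "is_frame J K F \<longleftrightarrow> (\<exists>c C. c > 0 \<and> C > 0 \<and> (\<forall>f\<in>l2 J.
     ennreal (c * l2_normsq J f) \<le> (\<Sum>\<^sub>\<infinity>k\<in>K. ennreal ((cmod (l2_inner J f (F k)))^2)) \<and>
     (\<Sum>\<^sub>\<infinity>k\<in>K. ennreal ((cmod (l2_inner J f (F k)))^2)) \<le> ennreal (C * l2_normsq J f)))"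

definition semicont_frame :: "'j set \<Rightarrow> ('j \<Rightarrow> complex) \<Rightarrow> 'i set \<Rightarrow> ('i \<Rightarrow> 'j \<Rightarrow> complex) \<Rightarrow> real set \<Rightarrow> bool" where
  "semicont_frame J lam I g T \<longleftrightarrow> (\<exists>c C. c > 0 \<and> C > 0 \<and> (\<forall>f\<in>l2 J.
     ennreal (c * l2_normsq J f) \<le>
       (\<Sum>\<^sub>\<infinity>i\<in>I. \<integral>\<^sup>+ t\<in>T. ennreal ((cmod (l2_inner J f (expA lam t (g i))))^2) \<partial>lborel) \<and>
     (\<Sum>\<^sub>\<infinity>i\<in>I. \<integral>\<^sup>+ t\<in>T. ennreal ((cmod (l2_inner J f (expA lam t (g i))))^2) \<partial>lborel)
       \<le> ennreal (C * l2_normsq J f)))"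

end

theory Submission
  imports Defs "HOL-Real_Asymp.Real_Asymp"
begin
lemma ennreal_infsum_nat: fixes f :: "nat \<Rightarrow> ennreal"
  shows "infsum f UNIV = (\<integral>\<^sup>+n. f n \<partial>count_space UNIV)"
proof -
  have "infsum f UNIV = (SUP F\<in>{F. finite F \<and> F\<subseteq>UNIV}. sum f F)"
    by (rule nonneg_infsum_complete) auto
  also have "\<dots> = (SUP n. sum f {..<n})"
  proof (rule antisym)
    show "(SUP F\<in>{F. finite F \<and> F\<subseteq>UNIV}. sum f F) \<le> (SUP n. sum f {..<n})"
    proof (rule SUP_least)
      fix F :: "nat set" assume "F \<in> {F. finite F \<and> F\<subseteq>UNIV}"
      then have fin: "finite F" by auto
      then obtain n where "F \<subseteq> {..<n}"
        by (meson finite_nat_bounded)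
      then have "sum f F \<le> sum f {..<n}" by (intro sum_mono2) auto
      also have "\<dots> \<le> (SUP n. sum f {..<n})" by (rule SUP_upper) auto
      finally show "sum f F \<le> (SUP n. sum f {..<n})" .
    qed
    show "(SUP n. sum f {..<n}) \<le> (SUP F\<in>{F. finite F \<and> F\<subseteq>UNIV}. sum f F)"
      by (rule SUP_least, rule SUP_upper) auto
  qed
  also have "\<dots> = suminf f" by (simp add: suminf_eq_SUP)
  also have "\<dots> = (\<integral>\<^sup>+n. f n \<partial>count_space UNIV)" by (simp add: nn_integral_count_space_nat)
  finally show ?thesis .
qed

lemma ennreal_infsum_nat_suminf: fixes f :: "nat \<Rightarrow> ennreal"
  shows "infsum f UNIV = suminf f"
  by (simp add: ennreal_infsum_nat nn_integral_count_space_nat)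

lemma ennreal_infsum_Sigma: fixes f :: "'a \<times> nat \<Rightarrow> ennreal"
  shows "infsum f (A \<times> UNIV) = (\<Sum>\<^sub>\<infinity>a\<in>A. \<Sum>\<^sub>\<infinity>n\<in>UNIV. f (a, n))"
proof -
  have L: "infsum f (A \<times> UNIV) = (SUP G\<in>{G. finite G \<and> G\<subseteq>A \<times> UNIV}. sum f G)"
    by (rule nonneg_infsum_complete) auto
  have R: "(\<Sum>\<^sub>\<infinity>a\<in>A. \<Sum>\<^sub>\<infinity>n\<in>UNIV. f (a, n)) = (SUP F\<in>{F. finite F \<and> F\<subseteq>A}. \<Sum>a\<in>F. (\<Sum>n. f (a, n)))"
    by (subst nonneg_infsum_complete) (auto simp: ennreal_infsum_nat_suminf)
  show ?thesis unfolding L R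
  proof (rule antisym)
    show "(SUP G\<in>{G. finite G \<and> G\<subseteq>A \<times> UNIV}. sum f G) \<le> (SUP F\<in>{F. finite F \<and> F\<subseteq>A}. \<Sum>a\<in>F. (\<Sum>n. f (a, n)))"
    proof (rule SUP_least)
      fix G :: "('a \<times> nat) set" assume G: "G \<in> {G. finite G \<and> G\<subseteq>A \<times> UNIV}"
      then have fin: "finite G" by auto
      then obtain N where N: "snd ` G \<subseteq> {..<N}" by (meson finite_imageI finite_nat_bounded)
      have "G \<subseteq> fst ` G \<times> {..<N}" using N by force
      then have "sum f G \<le> sum f (fst ` G \<times> {..<N})" using fin by (intro sum_mono2) auto
      also have "\<dots> = (\<Sum>a\<in>fst ` G. \<Sum>n<N. f (a, n))" by (simp add: sum.cartesian_product)
      also have "\<dots> \<le> (\<Sum>a\<in>fst ` G. (\<Sum>n. f (a, n)))"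
        by (intro sum_mono sum_le_suminf) auto
      also have "\<dots> \<le> (SUP F\<in>{F. finite F \<and> F\<subseteq>A}. \<Sum>a\<in>F. (\<Sum>n. f (a, n)))"
        using G by (intro SUP_upper) auto
      finally show "sum f G \<le> \<dots>" .
    qed
    show "(SUP F\<in>{F. finite F \<and> F\<subseteq>A}. \<Sum>a\<in>F. (\<Sum>n. f (a, n))) \<le> (SUP G\<in>{G. finite G \<and> G\<subseteq>A \<times> UNIV}. sum f G)"
    proof (rule SUP_least)
      fix F :: "'a set" assume F: "F \<in> {F. finite F \<and> F\<subseteq>A}"
      have "(\<Sum>a\<in>F. (\<Sum>n. f (a, n))) = (\<Sum>n. \<Sum>a\<in>F. f (a, n))"
        by (rule suminf_sum[symmetric]) auto
      also have "\<dots> = (SUP N. \<Sum>n<N. \<Sum>a\<in>F. f (a, n))" by (simp add: suminf_eq_SUP)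
      also have "\<dots> \<le> (SUP G\<in>{G. finite G \<and> G\<subseteq>A \<times> UNIV}. sum f G)"
      proof (rule SUP_least)
        fix N
        have "(\<Sum>n<N. \<Sum>a\<in>F. f (a, n)) = sum f (F \<times> {..<N})"
          by (subst sum.swap) (simp add: sum.cartesian_product)
        also have "\<dots> \<le> (SUP G\<in>{G. finite G \<and> G\<subseteq>A \<times> UNIV}. sum f G)"
          using F by (intro SUP_upper) auto
        finally show "(\<Sum>n<N. \<Sum>a\<in>F. f (a, n)) \<le> \<dots>" .
      qed
      finally show "(\<Sum>a\<in>F. (\<Sum>n. f (a, n))) \<le> \<dots>" .
    qed
  qed
qed

lemma infsum_dct:
  fixes a :: "nat \<Rightarrow> 'j \<Rightarrow> 'b::{banach, second_countable_topology}"
  assumes b: "b summable_on A" and bd: "\<And>m j. j \<in> A \<Longrightarrow> norm (a m j) \<le> b j"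
    and lim: "\<And>j. j \<in> A \<Longrightarrow> (\<lambda>m. a m j) \<longlonglongrightarrow> l j"
  shows "(\<lambda>m. \<Sum>\<^sub>\<infinity>j\<in>A. a m j) \<longlonglongrightarrow> (\<Sum>\<^sub>\<infinity>j\<in>A. l j)"
proof -
  have bnn: "j \<in> A \<Longrightarrow> b j \<ge> 0" for j using bd[of j 0] norm_ge_zero order_trans by blast
  have babs: "integrable (count_space A) b"
    proof -
    have "(\<lambda>x. norm (b x)) summable_on A" using b bnn by (subst summable_on_cong[where g=b]) auto
    then show ?thesis using abs_summable_equivalent[of b A] unfolding Infinite_Set_Sum.abs_summable_on_def by blast
  qed
  have lb: "j \<in> A \<Longrightarrow> norm (l j) \<le> b j" for j
    using lim[of j] bd[of j] by (intro LIMSEQ_le_const2[OF tendsto_norm]) auto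
  have am: "integrable (count_space A) (a m)" for m
    using babs bd unfolding Infinite_Set_Sum.abs_summable_on_def[symmetric] by (rule Infinite_Set_Sum.abs_summable_on_comparison_test') 
  have la: "integrable (count_space A) l"
    using babs lb unfolding Infinite_Set_Sum.abs_summable_on_def[symmetric] by (rule Infinite_Set_Sum.abs_summable_on_comparison_test')
  have "(\<lambda>m. integral\<^sup>L (count_space A) (a m)) \<longlonglongrightarrow> integral\<^sup>L (count_space A) l"
  proof (rule integral_dominated_convergence[where w=b])
    show "integrable (count_space A) b" using babs by simp
    show "AE x in count_space A. (\<lambda>i. a i x) \<longlonglongrightarrow> l x" using lim by (simp add: AE_count_space)
    show "\<And>i. AE x in count_space A. norm (a i x) \<le> b x" using bd by (simp add: AE_count_space)
  qed auto
  then show ?thesis using am la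
    by (simp add: infsetsum_def[symmetric] infsetsum_infsum Infinite_Set_Sum.abs_summable_on_def[symmetric])
qed

lemma hmap_cnj: "cnj (hmap z) = hmap (cnj z)"
  by (simp add: hmap_def)

lemma hmap_inv: "1 + z \<noteq> 0 \<Longrightarrow> hmap (hmap z) = z"
proof -
  assume nz: "1 + z \<noteq> 0"
  have a: "1 - (1 - z) / (1 + z) = 2*z/(1+z)" using nz by (simp add: field_simps)
  have b: "1 + (1 - z) / (1 + z) = 2/(1+z)" using nz by (simp add: field_simps)
  show ?thesis unfolding hmap_def a b using nz by simp
qed

lemma hmap_one: "1 + z \<noteq> 0 \<Longrightarrow> 1 + hmap z = 2 / (1 + z)"
  unfolding hmap_def by (simp add: field_simps)

lemma Re_nonneg_ne: "Re z \<ge> 0 \<Longrightarrow> 1 + z \<noteq> 0"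
proof
  assume "Re z \<ge> 0" "1 + z = 0"
  then have "Re (1 + z) = 0" by simp
  then show False using \<open>Re z \<ge> 0\<close> by simp
qed

lemma norm_1p_ge: "Re z \<ge> 0 \<Longrightarrow> 1 \<le> cmod (1 + z)"
proof -
  assume "Re z \<ge> 0"
  then have "1 \<le> Re (1 + z)" by simp
  also have "\<dots> \<le> cmod (1 + z)" by (rule complex_Re_le_cmod)
  finally show ?thesis .
qed

lemma cmod_sq: "(cmod z)^2 = (Re z)^2 + (Im z)^2"
  by (simp add: cmod_power2)

lemma hmap_norm_sq: "1 + z \<noteq> 0 \<Longrightarrow> (cmod (hmap z))^2 = 1 - 4 * Re z / (cmod (1 + z))^2"
proof -
  assume nz: "1 + z \<noteq> 0"
  then have pos: "(cmod (1 + z))^2 > 0" by simp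
  have "(cmod (hmap z))^2 = (cmod (1 - z))^2 / (cmod (1 + z))^2"
    by (simp add: hmap_def norm_divide power_divide)
  also have "(cmod (1 - z))^2 = (cmod (1 + z))^2 - 4 * Re z"
    by (simp only: cmod_sq) (simp add: power2_eq_square algebra_simps)
  finally show ?thesis using pos by (simp add: field_simps)
qed

lemma hmap_Re: "1 + x \<noteq> 0 \<Longrightarrow> Re (hmap x) = (1 - (cmod x)^2) / (cmod (1 + x))^2"
  unfolding hmap_def Re_divide by (simp only: cmod_sq) (simp add: power2_eq_square algebra_simps)

lemma hmap_norm_le1: "Re z \<ge> 0 \<Longrightarrow> cmod (hmap z) \<le> 1"
proof -
  assume a: "Re z \<ge> 0"
  have "(cmod (hmap z))^2 \<le> 1" using hmap_norm_sq[OF Re_nonneg_ne[OF a]] a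
    by (simp add: divide_nonneg_nonneg)
  then show ?thesis by (simp add: power_le_one_iff abs_le_square_iff[symmetric] ) 
qed

lemma hmap_norm_lt1: "Re z > 0 \<Longrightarrow> cmod (hmap z) < 1"
proof -
  assume a: "Re z > 0"
  have nz: "1 + z \<noteq> 0" using a Re_nonneg_ne by auto
  have "(cmod (hmap z))^2 < 1" using hmap_norm_sq[OF nz] a nz
    by (simp add: divide_pos_pos)
  then show ?thesis by (smt (verit) one_le_power norm_ge_zero) 
qed

lemma hmap_norm_bound:
  assumes "Re z \<ge> d" "d > 0" "cmod z \<le> M"
  shows "(cmod (hmap z))^2 \<le> 1 - 4 * d / (1 + M)^2"
proof -
  have nz: "1 + z \<noteq> 0" using assms Re_nonneg_ne by auto
  have "cmod (1 + z) \<le> 1 + M" using assms norm_triangle_ineq[of 1 z] by simp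
  moreover have "cmod (1 + z) > 0" using nz by simp
  ultimately have "(cmod (1 + z))^2 \<le> (1 + M)^2" by (simp add: power_mono)
  then have "4 * d / (1 + M)^2 \<le> 4 * Re z / (cmod (1 + z))^2"
    using assms nz by (intro frac_le) auto
  then show ?thesis using hmap_norm_sq[OF nz] by simp
qed

lemma integral_exp': 
  assumes  "T \<ge> 0" "a\<noteq>0"
  shows "((\<lambda>t. exp(a * complex_of_real t)) has_integral (exp(a * of_real T) - 1) / a) {0..T}"
proof -
  have "\<And>t. t \<in> {0..T} \<Longrightarrow> ((\<lambda>x. exp (a * x) / a) has_vector_derivative exp (a * t)) (at t within {0..T})"
    using assms
    by (intro derivative_eq_intros has_complex_derivative_imp_has_vector_derivative [unfolded o_def] | simp)+
  then have "((\<lambda>t. exp(a * of_real t)) has_integral exp(a * complex_of_real T)/a - exp(a * of_real 0)/a)  {0..T}"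
    by (meson fundamental_theorem_of_calculus \<open>T \<ge> 0\<close>)
  then show ?thesis
    by (simp add: diff_divide_distrib)
qed

lemma cexp_has_integral:
  fixes z :: complex assumes z: "Re z > 0"
  shows "((\<lambda>t::real. exp ((-z) * complex_of_real t)) has_integral 1/z) {0..}"
proof -
  define f where "f = (\<lambda>t::real. exp ((-z) * complex_of_real t))"
  have nz: "z \<noteq> 0" using z by auto
  have nf: "norm (f t) = exp (- Re z * t)" for t by (simp add: f_def norm_exp_eq_Re)
  have cf: "continuous_on UNIV f" unfolding f_def by (intro continuous_intros)
  have ai: "f absolutely_integrable_on {0..}"
  proof (rule measurable_bounded_by_integrable_imp_absolutely_integrable[where g="\<lambda>t. exp (- Re z * t)"])
    show "f \<in> borel_measurable (lebesgue_on {0..})"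
      using cf by (intro continuous_imp_measurable_on_sets_lebesgue) (auto intro: continuous_on_subset)
    show "(\<lambda>t. exp (- Re z * t)) integrable_on {0..}"
      using integrable_on_exp_minus_to_infinity[of "Re z" 0] z by simp
  qed (use nf in auto)
  have aib: "f absolutely_integrable_on {0..b}" for b :: real
    using ai by (rule set_integrable_subset) auto
  have lim1: "((\<lambda>b. set_lebesgue_integral lebesgue {0..b} f) \<longlongrightarrow> set_lebesgue_integral lebesgue {0..} f) at_top"
    by (rule tendsto_set_lebesgue_integral_at_top) (use ai in auto)
  have eqb: "set_lebesgue_integral lebesgue {0..b} f = (exp((-z) * of_real b) - 1) / (-z)" if "b \<ge> 0" for b
    using set_lebesgue_integral_eq_integral(2)[OF aib[of b]] integral_exp'[OF that, of "-z"] nz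
    unfolding f_def by (simp add: integral_unique)
  have lim2: "((\<lambda>b::real. (exp((-z) * of_real b) - 1) / (-z)) \<longlongrightarrow> (0 - 1) / (-z)) at_top"
  proof (intro tendsto_intros)
    show "((\<lambda>b::real. exp((-z) * of_real b)) \<longlongrightarrow> 0) at_top"
    proof (rule tendsto_norm_zero_cancel)
      have "((\<lambda>b::real. exp (- Re z * b)) \<longlongrightarrow> 0) at_top" using z by real_asymp
      then show "((\<lambda>b::real. norm (exp((-z) * of_real b))) \<longlongrightarrow> 0) at_top"
        by (simp add: norm_exp_eq_Re)
    qed
  qed (use nz in auto)
  have "((\<lambda>b. set_lebesgue_integral lebesgue {0..b} f) \<longlongrightarrow> 1/z) at_top"
  proof -
    have "\<forall>\<^sub>F b in at_top. (exp((-z) * of_real b) - 1) / (-z) = set_lebesgue_integral lebesgue {0..b} f"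
      by (rule eventually_mono[OF eventually_ge_at_top[of "0::real"]]) (use eqb in metis)
    from tendsto_cong[OF this] lim2 show ?thesis by simp
  qed
  then have "set_lebesgue_integral lebesgue {0..} f = 1/z" using lim1 tendsto_unique[OF trivial_limit_at_top_linorder] by blast
  then have "integral {0..} f = 1/z" using set_lebesgue_integral_eq_integral(2)[OF ai] by simp
  then show ?thesis using set_lebesgue_integral_eq_integral(1)[OF ai] unfolding f_def
    by (metis has_integral_integrable_integral)
qed

definition phi :: "('j \<Rightarrow> complex) \<Rightarrow> ('j \<Rightarrow> complex) \<Rightarrow> 'j set \<Rightarrow> real \<Rightarrow> complex" where
  "phi c mu A t = (\<Sum>\<^sub>\<infinity>j\<in>A. c j * exp ((- mu j) * complex_of_real t))"
definition sq :: "('j \<Rightarrow> complex) \<Rightarrow> ('j \<Rightarrow> complex) \<Rightarrow> 'j set \<Rightarrow> nat \<Rightarrow> complex" where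
  "sq c mu A n = (\<Sum>\<^sub>\<infinity>j\<in>A. c j * (complex_of_real (sqrt 2) * hmap (mu j) ^ n / (1 + mu j)))"
definition Xv :: "('j \<Rightarrow> complex) \<Rightarrow> ('j \<Rightarrow> complex) \<Rightarrow> 'j set \<Rightarrow> ennreal" where
  "Xv c mu A = (\<integral>\<^sup>+t\<in>{0..}. ennreal ((cmod (phi c mu A t))^2) \<partial>lborel)"
definition Yv :: "('j \<Rightarrow> complex) \<Rightarrow> ('j \<Rightarrow> complex) \<Rightarrow> 'j set \<Rightarrow> ennreal" where
  "Yv c mu A = (\<Sum>\<^sub>\<infinity>n\<in>UNIV. ennreal ((cmod (sq c mu A n))^2))"

lemma cmod_sum_sq: "(cmod (sum a F))^2 = Re (\<Sum>j\<in>F. \<Sum>k\<in>F. a j * cnj (a k))"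
proof -
  have "complex_of_real ((cmod (sum a F))^2) = sum a F * cnj (sum a F)" by (rule complex_norm_square)
  also have "\<dots> = (\<Sum>j\<in>F. \<Sum>k\<in>F. a j * cnj (a k))" by (simp add: cnj_sum sum_product)
  finally show ?thesis by (metis Re_complex_of_real)
qed

lemma ennreal_has_sum:
  fixes f :: "'a \<Rightarrow> real"
  assumes "(f has_sum S) A" "\<And>x. x \<in> A \<Longrightarrow> f x \<ge> 0"
  shows "(\<Sum>\<^sub>\<infinity>x\<in>A. ennreal (f x)) = ennreal S"
proof -
  have S: "S = infsum f A" using assms(1) by (simp add: infsumI)
  have "ennreal (infsum f A) = (SUP F\<in>{F. finite F \<and> F \<subseteq> A}. (ennreal (sum f F)))"
    using assms by (intro infsum_nonneg_is_SUPREMUM_ennreal) (auto simp: has_sum_imp_summable)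
  also have "\<dots> = (SUP F\<in>{F. finite F \<and> F \<subseteq> A}. (\<Sum>x\<in>F. ennreal (f x)))"
    using assms(2) by (intro SUP_cong refl) (auto simp: sum_ennreal subsetD)
  also have "\<dots> = (\<Sum>\<^sub>\<infinity>x\<in>A. ennreal (f x))"
    by (rule nonneg_infsum_complete[symmetric]) auto
  finally show ?thesis using S by simp
qed

lemma hmap_alg:
  assumes "1 + m \<noteq> 0" "1 + v \<noteq> 0" "m + v \<noteq> 0"
  shows "2 / ((1 + m) * (1 + v)) / (1 - hmap m * hmap v) = 1 / (m + v)"
proof -
  have "(1 + m) * (1 + v) * (1 - hmap m * hmap v) = (1 + m) * (1 + v) - (1 - m) * (1 - v)"
  proof -
    have D: "(1 + m) * (1 + v) \<noteq> 0" using assms by simp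
    have "hmap m * hmap v = ((1 - m) * (1 - v)) / ((1 + m) * (1 + v))" by (simp add: hmap_def)
    moreover have "\<And>X D. D \<noteq> (0::complex) \<Longrightarrow> D * (1 - X / D) = D - X" by (simp add: field_simps)
    ultimately show ?thesis using D by (metis mult.assoc)
  qed
  also have "\<dots> = 2 * (m + v)" by (simp add: algebra_simps)
  finally have e: "(1 + m) * (1 + v) * (1 - hmap m * hmap v) = 2 * (m + v)" .
  have "2 / ((1 + m) * (1 + v)) / (1 - hmap m * hmap v) = 2 / ((1 + m) * (1 + v) * (1 - hmap m * hmap v))"
    by simp
  also have "\<dots> = 1 / (m + v)" by (simp only: e divide_divide_eq_left[symmetric]) simp
  finally show ?thesis .
qed

lemma cnj_exp': "cnj (exp z) = exp (cnj z)"
  by (metis exp_cnj)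

lemma finite_X:
  assumes F: "finite F" and pos: "\<forall>j\<in>F. Re (mu j) > 0"
  shows "Xv c mu F = ennreal (Re (\<Sum>j\<in>F. \<Sum>k\<in>F. c j * cnj (c k) / (mu j + cnj (mu k))))"
proof -
  define g where "g = (\<lambda>t. \<Sum>j\<in>F. \<Sum>k\<in>F. c j * cnj (c k) * exp ((-(mu j + cnj (mu k))) * complex_of_real t))"
  have e: "(cmod (phi c mu F t))^2 = Re (g t)" for t
  proof -
    have "phi c mu F t = (\<Sum>j\<in>F. c j * exp ((- mu j) * complex_of_real t))" by (simp add: phi_def F)
    then have "(cmod (phi c mu F t))^2 = Re (\<Sum>j\<in>F. \<Sum>k\<in>F. (c j * exp ((- mu j) * complex_of_real t)) * cnj (c k * exp ((- mu k) * complex_of_real t)))"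
      by (simp add: cmod_sum_sq)
    also have "\<dots> = Re (g t)" unfolding g_def
      by (intro arg_cong[where f=Re] sum.cong refl) (simp add: cnj_exp' exp_add[symmetric] algebra_simps)
    finally show ?thesis .
  qed
  have "(g has_integral (\<Sum>j\<in>F. \<Sum>k\<in>F. c j * cnj (c k) * (1 / (mu j + cnj (mu k))))) {0..}"
    unfolding g_def
  proof (intro has_integral_sum[OF F] ballI has_integral_mult_right cexp_has_integral)
    fix j k assume "j \<in> F" "k \<in> F"
    then show "0 < Re (mu j + cnj (mu k))" using pos by (simp add: add_pos_pos)
  qed
  from has_integral_linear[OF this bounded_linear_Re]
  have hI: "((Re \<circ> g) has_integral Re (\<Sum>j\<in>F. \<Sum>k\<in>F. c j * cnj (c k) / (mu j + cnj (mu k)))) {0..}"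
    by simp
  have "integral\<^sup>N lborel (\<lambda>x. ennreal ((Re \<circ> g) x) * indicator {0..} x) = ennreal (Re (\<Sum>j\<in>F. \<Sum>k\<in>F. c j * cnj (c k) / (mu j + cnj (mu k))))"
    by (rule nn_integral_has_integral_lebesgue'[OF _ hI]) (simp add: e[symmetric])
  then show ?thesis unfolding Xv_def by (simp add: e o_def)
qed

lemma finite_Y:
  assumes F: "finite F" and pos: "\<forall>j\<in>F. Re (mu j) > 0"
  shows "Yv c mu F = ennreal (Re (\<Sum>j\<in>F. \<Sum>k\<in>F. c j * cnj (c k) / (mu j + cnj (mu k))))"
proof -
  define b where "b = (\<lambda>j. c j * (complex_of_real (sqrt 2) / (1 + mu j)))"
  define w where "w = (\<lambda>j. hmap (mu j))"
  have nz: "1 + mu j \<noteq> 0" if "j \<in> F" for j using pos that Re_nonneg_ne by (simp add: less_imp_le)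
  have nzc: "1 + cnj (mu j) \<noteq> 0" if "j \<in> F" for j using pos that Re_nonneg_ne[of "cnj (mu j)"] by (simp add: less_imp_le)
  have wl: "cmod (w j) < 1" if "j \<in> F" for j using hmap_norm_lt1 pos that by (simp add: w_def)
  have e: "(cmod (sq c mu F n))^2 = Re (\<Sum>j\<in>F. \<Sum>k\<in>F. b j * cnj (b k) * (w j * cnj (w k))^n)" for n
  proof -
    have "sq c mu F n = (\<Sum>j\<in>F. b j * w j ^ n)" by (simp add: sq_def F b_def w_def mult.assoc)
    then have "(cmod (sq c mu F n))^2 = Re (\<Sum>j\<in>F. \<Sum>k\<in>F. (b j * w j ^ n) * cnj (b k * w k ^ n))"
      by (simp add: cmod_sum_sq)
    also have "\<dots> = Re (\<Sum>j\<in>F. \<Sum>k\<in>F. b j * cnj (b k) * (w j * cnj (w k))^n)"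
      by (simp add: power_mult_distrib mult_ac)
    finally show ?thesis .
  qed
  have s: "(\<lambda>n. \<Sum>j\<in>F. \<Sum>k\<in>F. b j * cnj (b k) * (w j * cnj (w k))^n) sums (\<Sum>j\<in>F. \<Sum>k\<in>F. b j * cnj (b k) * (1 / (1 - w j * cnj (w k))))"
  proof (intro sums_sum sums_mult)
    fix j k assume jk: "j \<in> F" "k \<in> F"
    have "norm (w j * cnj (w k)) < 1"
    proof -
      have "norm (w j) * norm (w k) \<le> norm (w j) * 1"
        using wl[OF jk(2)] by (intro mult_left_mono) auto
      then show ?thesis using wl[OF jk(1)] by (simp add: norm_mult)
    qed
    then show "(\<lambda>n. (w j * cnj (w k))^n) sums (1 / (1 - w j * cnj (w k)))"
      using geometric_sums by (simp add: divide_inverse)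
  qed
  have val: "b j * cnj (b k) * (1 / (1 - w j * cnj (w k))) = c j * cnj (c k) / (mu j + cnj (mu k))"
    if jk: "j \<in> F" "k \<in> F" for j k
  proof -
    have rj: "Re (mu j) > 0" and rk: "Re (mu k) > 0" using pos jk by auto
    have "Re (mu j + cnj (mu k)) > 0" using rj rk by simp
    then have mv: "mu j + cnj (mu k) \<noteq> 0" by (metis zero_complex.sel(1) less_irrefl)
    have r2: "complex_of_real (sqrt 2) * complex_of_real (sqrt 2) = 2"
    proof -
      have "complex_of_real (sqrt 2) * complex_of_real (sqrt 2) = complex_of_real (sqrt 2 * sqrt 2)"
        by (simp only: of_real_mult)
      also have "sqrt 2 * sqrt 2 = (2::real)" by simp
      finally show ?thesis by simp
    qed
    have cb: "cnj (b k) = cnj (c k) * (complex_of_real (sqrt 2) / (1 + cnj (mu k)))" by (simp add: b_def)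
    have "b j * cnj (b k) = c j * cnj (c k) * ((complex_of_real (sqrt 2) * complex_of_real (sqrt 2)) / ((1 + mu j) * (1 + cnj (mu k))))"
      unfolding cb b_def by (simp add: divide_inverse mult_ac)
    also have "\<dots> = c j * cnj (c k) * (2 / ((1 + mu j) * (1 + cnj (mu k))))" by (simp only: r2)
    finally have bb: "b j * cnj (b k) = c j * cnj (c k) * (2 / ((1 + mu j) * (1 + cnj (mu k))))" .
    have cw: "cnj (w k) = hmap (cnj (mu k))" by (simp add: w_def hmap_cnj)
    have "b j * cnj (b k) * (1 / (1 - w j * cnj (w k))) = c j * cnj (c k) * (2 / ((1 + mu j) * (1 + cnj (mu k))) / (1 - hmap (mu j) * hmap (cnj (mu k))))"
    proof -
      have g: "\<And>x y z::complex. x * y * (1 / z) = x * (y / z)" by simp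
      show ?thesis by (simp only: bb cw) (simp only: w_def g)
    qed
    also have "\<dots> = c j * cnj (c k) * (1 / (mu j + cnj (mu k)))"
      by (simp only: hmap_alg[OF nz[OF jk(1)] nzc[OF jk(2)] mv])
    finally show ?thesis by (simp only: times_divide_eq_right mult_1_right)
  qed
  have s2: "(\<lambda>n. (cmod (sq c mu F n))^2) sums Re (\<Sum>j\<in>F. \<Sum>k\<in>F. c j * cnj (c k) / (mu j + cnj (mu k)))"
  proof -
    have L: "(\<Sum>j\<in>F. \<Sum>k\<in>F. b j * cnj (b k) * (1 / (1 - w j * cnj (w k)))) = (\<Sum>j\<in>F. \<Sum>k\<in>F. c j * cnj (c k) / (mu j + cnj (mu k)))"
      using val by (intro sum.cong refl) auto
    have E: "(\<lambda>n. (cmod (sq c mu F n))^2) = (\<lambda>n. Re (\<Sum>j\<in>F. \<Sum>k\<in>F. b j * cnj (b k) * (w j * cnj (w k))^n))"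
      by (rule ext) (rule e)
    show ?thesis unfolding E L[symmetric] by (rule sums_Re[OF s])
  qed
  have "((\<lambda>n. (cmod (sq c mu F n))^2) has_sum Re (\<Sum>j\<in>F. \<Sum>k\<in>F. c j * cnj (c k) / (mu j + cnj (mu k)))) UNIV"
    by (rule sums_nonneg_imp_has_sum[OF s2]) simp
  then show ?thesis unfolding Yv_def by (rule ennreal_has_sum) simp
qed

lemma norm_exp_le: "Re m \<ge> d \<Longrightarrow> t \<ge> 0 \<Longrightarrow> cmod (exp ((- m) * complex_of_real t)) \<le> exp (- d * t)"
proof -
  assume a: "Re m \<ge> d" "t \<ge> 0"
  have "cmod (exp ((- m) * complex_of_real t)) = exp (- Re m * t)" by (simp add: norm_exp_eq_Re)
  also have "\<dots> \<le> exp (- d * t)" using a by (simp add: mult_right_mono)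
  finally show ?thesis .
qed

lemma trunc_infsum:
  fixes f :: "'j \<Rightarrow> complex"
  assumes "F \<subseteq> A" shows "infsum f F = (\<Sum>\<^sub>\<infinity>j\<in>A. if j \<in> F then f j else 0)"
  by (rule infsum_cong_neutral) (use assms in auto)

lemma chain_exists:
  assumes A: "countable A" "A \<noteq> {}"
  obtains F :: "nat \<Rightarrow> 'j set" where "\<And>m. finite (F m)" "\<And>m. F m \<subseteq> A"
     "\<And>j. j \<in> A \<Longrightarrow> eventually (\<lambda>m. j \<in> F m) sequentially"
proof
  define F where "F m = from_nat_into A ` {..<m}" for m
  show "finite (F m)" for m by (simp add: F_def)
  show "F m \<subseteq> A" for m using from_nat_into[OF A(2)] by (auto simp: F_def)
  show "eventually (\<lambda>m. j \<in> F m) sequentially" if j: "j \<in> A" for j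
  proof (rule eventually_mono[OF eventually_ge_at_top[of "Suc (to_nat_on A j)"]])
    fix m assume "Suc (to_nat_on A j) \<le> m"
    then have "to_nat_on A j \<in> {..<m}" by simp
    then show "j \<in> F m" unfolding F_def using from_nat_into_to_nat_on[OF A(1) j]
      by (metis image_eqI)
  qed
qed

lemma Xe: "Xv c mu B = (\<integral>\<^sup>+t. ennreal (indicator {0..} t * (cmod (phi c mu B t))^2) \<partial>lborel)"
  unfolding Xv_def by (intro nn_integral_cong) (auto simp: indicator_def)

lemma Ye: "Yv c mu B = (\<integral>\<^sup>+n. ennreal ((cmod (sq c mu B n))^2) \<partial>count_space UNIV)"
  unfolding Yv_def by (rule ennreal_infsum_nat)

lemma phi_finite: "finite F \<Longrightarrow> phi c mu F = (\<lambda>t. \<Sum>j\<in>F. c j * exp ((- mu j) * complex_of_real t))"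
  by (rule ext) (simp add: phi_def)

lemma phi_meas: "finite F \<Longrightarrow> (\<lambda>t. indicator {0..} t * (cmod (phi c mu F t))^2) \<in> borel_measurable borel"
proof -
  assume F: "finite F"
  have "continuous_on UNIV (phi c mu F)" unfolding phi_finite[OF F] by (intro continuous_intros)
  then have "phi c mu F \<in> borel_measurable borel" by (rule borel_measurable_continuous_onI)
  then show ?thesis by measurable
qed

lemma nice_XY:
  fixes c mu :: "'j \<Rightarrow> complex"
  assumes A: "countable A" and cs: "(\<lambda>j. cmod (c j)) summable_on A"
    and d: "d > 0" and re: "\<forall>j\<in>A. Re (mu j) \<ge> d" and M: "\<forall>j\<in>A. cmod (mu j) \<le> M"
  shows "Xv c mu A = Yv c mu A"
proof (cases "A = {}")
  case True then show ?thesis using finite_X[of "{}" mu c] finite_Y[of "{}" mu c] by simp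
next
  case False
  obtain F where Ffin: "\<And>m. finite (F m)" and FA: "\<And>m. F m \<subseteq> A"
     and ev: "\<And>j. j \<in> A \<Longrightarrow> eventually (\<lambda>m. j \<in> F m) sequentially"
    using chain_exists[OF A False] by blast
  define K where "K = (\<Sum>\<^sub>\<infinity>j\<in>A. cmod (c j))"
  have K0: "K \<ge> 0" unfolding K_def by (rule infsum_nonneg) simp
  have sumF: "(\<Sum>j\<in>F m. cmod (c j)) \<le> K" for m
    unfolding K_def by (rule finite_sum_le_infsum[OF cs Ffin FA]) simp
  have posA: "\<forall>j\<in>A. Re (mu j) > 0" using re d by (auto intro: less_le_trans)
  have XYF: "Xv c mu (F m) = Yv c mu (F m)" for m
  proof -
    have "\<forall>j\<in>F m. Re (mu j) > 0" using posA FA by blast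
    then show ?thesis using finite_X[OF Ffin, of m mu c] finite_Y[OF Ffin, of m mu c] by simp
  qed
  have phiconv: "(\<lambda>m. phi c mu (F m) t) \<longlonglongrightarrow> phi c mu A t" if t: "t \<ge> 0" for t
    unfolding phi_def trunc_infsum[OF FA]
  proof (rule infsum_dct[OF cs])
    fix m j assume j: "j \<in> A"
    have "cmod (exp ((- mu j) * complex_of_real t)) \<le> exp (- 0 * t)"
      by (rule norm_exp_le) (use posA j t in auto)
    then show "norm (if j \<in> F m then c j * exp ((- mu j) * complex_of_real t) else 0) \<le> cmod (c j)"
      by (auto simp: norm_mult intro: mult_left_le)
  next
    fix j assume j: "j \<in> A"
    show "(\<lambda>m. if j \<in> F m then c j * exp ((- mu j) * complex_of_real t) else 0) \<longlonglongrightarrow> c j * exp ((- mu j) * complex_of_real t)"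
      by (rule tendsto_eventually) (rule eventually_mono[OF ev[OF j]], simp)
  qed
  define v where "v B t = indicator {0..} t * (cmod (phi c mu B t))^2" for B t
  have vconv: "(\<lambda>m. v (F m) t) \<longlonglongrightarrow> v A t" for t
  proof (cases "t \<ge> 0")
    case True then show ?thesis unfolding v_def by (intro tendsto_intros phiconv)
  next
    case False then show ?thesis unfolding v_def by simp
  qed
  have vmeas: "v (F m) \<in> borel_measurable borel" for m
    unfolding v_def using phi_meas[OF Ffin] by (simp add: v_def)
  have vAmeas: "v A \<in> borel_measurable borel"
    by (rule borel_measurable_LIMSEQ_metric[OF vmeas vconv])
  have vbound: "v (F m) t \<le> indicator {0..} t * (K^2 * exp (- (2*d) * t))" for m t
  proof (cases "t \<ge> 0")
    case t: True
    have "cmod (phi c mu (F m) t) \<le> (\<Sum>j\<in>F m. cmod (c j * exp ((- mu j) * complex_of_real t)))"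
      unfolding phi_finite[OF Ffin] by (rule norm_sum)
    also have "\<dots> \<le> (\<Sum>j\<in>F m. cmod (c j) * exp (- d * t))"
    proof (rule sum_mono)
      fix j assume "j \<in> F m"
      then have "Re (mu j) \<ge> d" using re FA by blast
      then have "cmod (exp ((- mu j) * complex_of_real t)) \<le> exp (- d * t)" using t by (rule norm_exp_le)
      then show "cmod (c j * exp ((- mu j) * complex_of_real t)) \<le> cmod (c j) * exp (- d * t)"
        by (simp add: norm_mult mult_left_mono)
    qed
    also have "\<dots> = (\<Sum>j\<in>F m. cmod (c j)) * exp (- d * t)" by (simp add: sum_distrib_right)
    also have "\<dots> \<le> K * exp (- d * t)" using sumF by (intro mult_right_mono) auto
    finally have "cmod (phi c mu (F m) t) \<le> K * exp (- d * t)" .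
    then have "(cmod (phi c mu (F m) t))^2 \<le> (K * exp (- d * t))^2" by (intro power_mono) auto
    also have "(K * exp (- d * t))^2 = K^2 * exp (- (2*d) * t)"
      by (simp add: power_mult_distrib power2_eq_square exp_add[symmetric])
    finally show ?thesis using t by (simp add: v_def)
  next
    case False then show ?thesis by (simp add: v_def)
  qed
  have wint: "(\<integral>\<^sup>+t. ennreal (K^2 * exp (- (2*d) * t)) * indicator {0..} t \<partial>lborel) = ennreal (K^2 * (exp (- (2*d) * 0) / (2*d)))"
  proof (rule nn_integral_has_integral_lebesgue')
    show "((\<lambda>t. K^2 * exp (- (2*d) * t)) has_integral K^2 * (exp (- (2*d) * 0) / (2*d))) {0..}"
      by (intro has_integral_mult_right has_integral_exp_minus_to_infinity) (use d in simp)
  qed simp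
  have Xconv: "(\<lambda>m. Xv c mu (F m)) \<longlonglongrightarrow> Xv c mu A"
    unfolding Xe v_def[symmetric]
  proof (rule nn_integral_dominated_convergence[where w="\<lambda>t. ennreal (K^2 * exp (- (2*d) * t)) * indicator {0..} t"])
    show "(\<lambda>x. ennreal (v (F i) x)) \<in> borel_measurable lborel" for i using vmeas[of i] by measurable
    show "(\<lambda>x. ennreal (v A x)) \<in> borel_measurable lborel" using vAmeas by measurable
    show "(\<lambda>t. ennreal (K^2 * exp (- (2*d) * t)) * indicator {0..} t) \<in> borel_measurable lborel" by measurable
    show "AE x in lborel. ennreal (v (F j) x) \<le> ennreal (K^2 * exp (- (2*d) * x)) * indicator {0..} x" for j
    proof (intro AE_I2)
      fix x show "ennreal (v (F j) x) \<le> ennreal (K^2 * exp (- (2*d) * x)) * indicator {0..} x"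
      proof (cases "x \<ge> 0")
        case True then show ?thesis using vbound[of j x] by (simp add: ennreal_leI)
      next
        case False then show ?thesis by (simp add: v_def)
      qed
    qed
    show "(\<integral>\<^sup>+t. ennreal (K^2 * exp (- (2*d) * t)) * indicator {0..} t \<partial>lborel) < \<infinity>"
      unfolding wint by simp
    show "AE x in lborel. (\<lambda>i. ennreal (v (F i) x)) \<longlonglongrightarrow> ennreal (v A x)"
      using vconv by (intro AE_I2 tendsto_ennrealI)
  qed
  obtain j0 where j0: "j0 \<in> A" using False by blast
  define Q where "Q = 1 - 4*d/(1+M)^2"
  have hQ: "(cmod (hmap (mu j)))^2 \<le> Q" if j: "j \<in> A" for j
    unfolding Q_def by (rule hmap_norm_bound) (use re M d j in auto)
  have Q0: "Q \<ge> 0" using hQ[OF j0] by (meson order_trans zero_le_power2)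
  have M0: "M \<ge> 0" using M j0 by (meson norm_ge_zero order_trans)
  have Q1: "Q < 1" unfolding Q_def using d M0 by (simp add: divide_pos_pos)
  define q where "q = sqrt Q"
  have hq: "cmod (hmap (mu j)) \<le> q" if j: "j \<in> A" for j unfolding q_def by (rule real_le_rsqrt[OF hQ[OF j]])
  have q0: "q \<ge> 0" unfolding q_def using Q0 by simp
  have qQ: "q^2 = Q" unfolding q_def using Q0 by simp
  have qn: "(q^n)^2 = Q^n" for n by (metis power_mult mult.commute qQ)
  have termb: "cmod (complex_of_real (sqrt 2) * hmap (mu j) ^ n / (1 + mu j)) \<le> sqrt 2 * q^n" if j: "j \<in> A" for j n
  proof -
    have n1: "cmod (1 + mu j) \<ge> 1" using posA j by (intro norm_1p_ge) auto
    have "cmod (complex_of_real (sqrt 2) * hmap (mu j) ^ n / (1 + mu j)) = sqrt 2 * cmod (hmap (mu j)) ^ n / cmod (1 + mu j)"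
      by (simp add: norm_divide norm_mult norm_power)
    also have "\<dots> \<le> sqrt 2 * cmod (hmap (mu j)) ^ n"
      using n1 by (metis div_by_1 divide_left_mono less_le_trans zero_less_one norm_ge_zero mult_nonneg_nonneg real_sqrt_ge_zero zero_le_power zero_le_numeral mult_pos_pos)
    also have "\<dots> \<le> sqrt 2 * q^n" using hq[OF j] by (intro mult_left_mono power_mono) auto
    finally show ?thesis .
  qed
  have sqconv: "(\<lambda>m. sq c mu (F m) n) \<longlonglongrightarrow> sq c mu A n" for n
    unfolding sq_def trunc_infsum[OF FA]
  proof (rule infsum_dct[where b="\<lambda>j. cmod (c j) * (sqrt 2 * q^n)"])
    show "(\<lambda>j. cmod (c j) * (sqrt 2 * q^n)) summable_on A" by (rule summable_on_cmult_left[OF cs])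
  next
    fix m j assume j: "j \<in> A"
    show "norm (if j \<in> F m then c j * (complex_of_real (sqrt 2) * hmap (mu j) ^ n / (1 + mu j)) else 0) \<le> cmod (c j) * (sqrt 2 * q^n)"
    proof -
      have t: "cmod (c j * (complex_of_real (sqrt 2) * hmap (mu j) ^ n / (1 + mu j))) \<le> cmod (c j) * (sqrt 2 * q^n)"
        by (simp only: norm_mult) (rule mult_left_mono[OF termb[OF j] norm_ge_zero])
      then show ?thesis by (cases "j \<in> F m") (auto intro: order_trans[OF norm_ge_zero t])
    qed
  next
    fix j assume j: "j \<in> A"
    show "(\<lambda>m. if j \<in> F m then c j * (complex_of_real (sqrt 2) * hmap (mu j) ^ n / (1 + mu j)) else 0) \<longlonglongrightarrow> c j * (complex_of_real (sqrt 2) * hmap (mu j) ^ n / (1 + mu j))"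
      by (rule tendsto_eventually) (rule eventually_mono[OF ev[OF j]], simp)
  qed
  have sqbound: "(cmod (sq c mu (F m) n))^2 \<le> 2 * K^2 * Q^n" for m n
  proof -
    have "cmod (sq c mu (F m) n) \<le> (\<Sum>j\<in>F m. cmod (c j * (complex_of_real (sqrt 2) * hmap (mu j) ^ n / (1 + mu j))))"
      unfolding sq_def infsum_finite[OF Ffin] by (rule norm_sum)
    also have "\<dots> \<le> (\<Sum>j\<in>F m. cmod (c j) * (sqrt 2 * q^n))"
    proof (rule sum_mono)
      fix j assume "j \<in> F m" then have j: "j \<in> A" using FA by blast
      show "cmod (c j * (complex_of_real (sqrt 2) * hmap (mu j) ^ n / (1 + mu j))) \<le> cmod (c j) * (sqrt 2 * q^n)"
        by (simp only: norm_mult) (rule mult_left_mono[OF termb[OF j] norm_ge_zero])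
    qed
    also have "\<dots> = (\<Sum>j\<in>F m. cmod (c j)) * (sqrt 2 * q^n)" by (simp add: sum_distrib_right)
    also have "\<dots> \<le> K * (sqrt 2 * q^n)" using sumF q0 by (intro mult_right_mono) auto
    finally have "cmod (sq c mu (F m) n) \<le> K * (sqrt 2 * q^n)" .
    then have "(cmod (sq c mu (F m) n))^2 \<le> (K * (sqrt 2 * q^n))^2" by (intro power_mono) auto
    also have "(K * (sqrt 2 * q^n))^2 = 2 * K^2 * Q^n" by (simp add: power_mult_distrib qn)
    finally show ?thesis .
  qed
  have wsum: "(\<integral>\<^sup>+n. ennreal (2 * K^2 * Q^n) \<partial>count_space UNIV) = ennreal (2 * K^2 * (1 / (1 - Q)))"
  proof -
    have "(\<lambda>n. 2 * K^2 * Q^n) sums (2 * K^2 * (1 / (1 - Q)))"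
      by (intro sums_mult geometric_sums) (use Q0 Q1 in simp)
    then have "((\<lambda>n. 2 * K^2 * Q^n) has_sum (2 * K^2 * (1 / (1 - Q)))) UNIV"
      by (rule sums_nonneg_imp_has_sum) (use Q0 in simp)
    then have "(\<Sum>\<^sub>\<infinity>n\<in>UNIV. ennreal (2 * K^2 * Q^n)) = ennreal (2 * K^2 * (1 / (1 - Q)))"
      by (rule ennreal_has_sum) (use Q0 in simp)
    then show ?thesis by (simp add: ennreal_infsum_nat)
  qed
  have Yconv: "(\<lambda>m. Yv c mu (F m)) \<longlonglongrightarrow> Yv c mu A"
    unfolding Ye
  proof (rule nn_integral_dominated_convergence[where w="\<lambda>n. ennreal (2 * K^2 * Q^n)"])
    show "AE x in count_space UNIV. ennreal ((cmod (sq c mu (F j) x))^2) \<le> ennreal (2 * K^2 * Q^x)" for j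
      using sqbound by (intro AE_I2 ennreal_leI)
    show "(\<integral>\<^sup>+n. ennreal (2 * K^2 * Q^n) \<partial>count_space UNIV) < \<infinity>" unfolding wsum by simp
    show "AE x in count_space UNIV. (\<lambda>i. ennreal ((cmod (sq c mu (F i) x))^2)) \<longlonglongrightarrow> ennreal ((cmod (sq c mu A x))^2)"
      using sqconv by (intro AE_I2 tendsto_ennrealI tendsto_intros)
  qed (simp_all only: borel_measurable_count_space)
  have Xconv': "(\<lambda>m. Yv c mu (F m)) \<longlonglongrightarrow> Xv c mu A" using Xconv unfolding XYF .
  show ?thesis by (rule LIMSEQ_unique[OF Xconv' Yconv])
qed

lemma phi_conv_trunc:
  assumes cs: "(\<lambda>j. cmod (c j)) summable_on A" and FA: "\<And>m. F m \<subseteq> A"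
    and ev: "\<And>j. j \<in> A \<Longrightarrow> eventually (\<lambda>m. j \<in> F m) sequentially"
    and re: "\<forall>j\<in>A. Re (mu j) \<ge> 0" and t: "t \<ge> 0"
  shows "(\<lambda>m. phi c mu (F m) t) \<longlonglongrightarrow> phi c mu A t"
  unfolding phi_def trunc_infsum[OF FA]
proof (rule infsum_dct[OF cs])
  fix m j assume j: "j \<in> A"
  have "cmod (exp ((- mu j) * complex_of_real t)) \<le> exp (- 0 * t)"
    by (rule norm_exp_le) (use re j t in auto)
  then show "norm (if j \<in> F m then c j * exp ((- mu j) * complex_of_real t) else 0) \<le> cmod (c j)"
    by (auto simp: norm_mult intro: mult_left_le)
next
  fix j assume j: "j \<in> A"
  show "(\<lambda>m. if j \<in> F m then c j * exp ((- mu j) * complex_of_real t) else 0) \<longlonglongrightarrow> c j * exp ((- mu j) * complex_of_real t)"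
    by (rule tendsto_eventually) (rule eventually_mono[OF ev[OF j]], simp)
qed

lemma phi_meas_A:
  assumes A: "countable A" and cs: "(\<lambda>j. cmod (c j)) summable_on A" and re: "\<forall>j\<in>A. Re (mu j) \<ge> 0"
  shows "(\<lambda>t. indicator {0..} t * (cmod (phi c mu A t))^2) \<in> borel_measurable borel"
proof (cases "A = {}")
  case True then show ?thesis using phi_meas[of "{}" c mu] by simp
next
  case False
  obtain F where Ffin: "\<And>m. finite (F m)" and FA: "\<And>m. F m \<subseteq> A"
     and ev: "\<And>j. j \<in> A \<Longrightarrow> eventually (\<lambda>m. j \<in> F m) sequentially"
    using chain_exists[OF A False] by blast
  show ?thesis
  proof (rule borel_measurable_LIMSEQ_metric[OF phi_meas[OF Ffin]])
    fix t :: real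
    show "(\<lambda>m. indicator {0..} t * (cmod (phi c mu (F m) t))^2) \<longlonglongrightarrow> indicator {0..} t * (cmod (phi c mu A t))^2"
    proof (cases "t \<ge> 0")
      case True then show ?thesis by (intro tendsto_intros phi_conv_trunc[OF cs FA ev re])
    next
      case False then show ?thesis by simp
    qed
  qed
qed

lemma div_le_self': "0 \<le> (x::real) \<Longrightarrow> 1 \<le> y \<Longrightarrow> x / y \<le> x"
proof -
  assume a: "0 \<le> x" "1 \<le> y"
  have "x * 1 \<le> x * y" using a by (intro mult_left_mono) auto
  then show ?thesis using a by (simp add: divide_le_eq)
qed

lemma liminf_le_const: fixes x :: "nat \<Rightarrow> ennreal"
  shows "(\<And>m. x m \<le> X) \<Longrightarrow> liminf x \<le> X"
proof -
  assume a: "\<And>m. x m \<le> X"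
  have "liminf x \<le> limsup x" by (rule Liminf_le_Limsup) simp
  also have "limsup x \<le> X" by (rule Limsup_bounded) (simp add: a)
  finally show ?thesis .
qed

lemma Y_le_X:
  fixes c mu :: "'j \<Rightarrow> complex"
  assumes A: "countable A" and cs: "(\<lambda>j. cmod (c j)) summable_on A"
    and pos: "\<forall>j\<in>A. Re (mu j) > 0" and M: "\<forall>j\<in>A. cmod (mu j) \<le> M"
  shows "Yv c mu A \<le> Xv c mu A"
proof -
  define e where "e m = 1 / real (Suc m)" for m
  have e0: "e m > 0" for m by (simp add: e_def)
  have e1: "e m \<le> 1" for m by (simp add: e_def)
  have elim: "e \<longlonglongrightarrow> 0" unfolding e_def by (rule LIMSEQ_Suc[OF lim_inverse_n'])
  define mu' where "mu' m j = mu j + complex_of_real (e m)" for m j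
  have nice: "Xv c (mu' m) A = Yv c (mu' m) A" for m
  proof (rule nice_XY[OF A cs e0[of m]])
    show "\<forall>j\<in>A. e m \<le> Re (mu' m j)" using pos by (auto simp: mu'_def less_imp_le)
    show "\<forall>j\<in>A. cmod (mu' m j) \<le> M + 1"
    proof
      fix j assume "j \<in> A"
      have "cmod (mu' m j) \<le> cmod (mu j) + cmod (complex_of_real (e m))"
        unfolding mu'_def by (rule norm_triangle_ineq)
      then show "cmod (mu' m j) \<le> M + 1" using M \<open>j \<in> A\<close> e0[of m] e1[of m] by auto
    qed
  qed
  have Xmono: "Xv c (mu' m) A \<le> Xv c mu A" for m
    unfolding Xv_def
  proof (rule nn_integral_mono)
    fix t :: real
    have "phi c (mu' m) A t = exp (- complex_of_real (e m * t)) * phi c mu A t"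
      unfolding phi_def
      by (subst infsum_cmult_right'[symmetric], intro infsum_cong)
         (simp add: mu'_def exp_add[symmetric] algebra_simps)
    then have "cmod (phi c (mu' m) A t) = exp (- (e m * t)) * cmod (phi c mu A t)"
      by (simp add: norm_mult norm_exp_eq_Re)
    moreover have "t \<ge> 0 \<Longrightarrow> exp (- (e m * t)) \<le> 1" using e0[of m] by simp
    ultimately have "t \<ge> 0 \<Longrightarrow> (cmod (phi c (mu' m) A t))^2 \<le> (cmod (phi c mu A t))^2"
      by (simp add: power_mono mult_left_le_one_le)
    then show "ennreal ((cmod (phi c (mu' m) A t))^2) * indicator {0..} t \<le> ennreal ((cmod (phi c mu A t))^2) * indicator {0..} t"
      by (auto simp: indicator_def ennreal_leI)
  qed
  have sqconv: "(\<lambda>m. sq c (mu' m) A n) \<longlonglongrightarrow> sq c mu A n" for n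
    unfolding sq_def
  proof (rule infsum_dct[where b="\<lambda>j. cmod (c j) * sqrt 2"])
    show "(\<lambda>j. cmod (c j) * sqrt 2) summable_on A" by (rule summable_on_cmult_left[OF cs])
  next
    fix m j assume j: "j \<in> A"
    have "Re (mu j) > 0" using pos j by blast
    then have re: "Re (mu' m j) \<ge> 0" using e0[of m] by (simp add: mu'_def)
    have n1: "cmod (1 + mu' m j) \<ge> 1" by (rule norm_1p_ge[OF re])
    have "cmod (complex_of_real (sqrt 2) * hmap (mu' m j) ^ n / (1 + mu' m j)) = sqrt 2 * cmod (hmap (mu' m j)) ^ n / cmod (1 + mu' m j)"
      by (simp add: norm_divide norm_mult norm_power)
    also have "\<dots> \<le> sqrt 2 * cmod (hmap (mu' m j)) ^ n"
      by (rule div_le_self') (use n1 in auto)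
    also have "\<dots> \<le> sqrt 2 * 1" using hmap_norm_le1[OF re] by (intro mult_left_mono power_le_one) auto
    finally have "cmod (complex_of_real (sqrt 2) * hmap (mu' m j) ^ n / (1 + mu' m j)) \<le> sqrt 2" by simp
    then show "norm (c j * (complex_of_real (sqrt 2) * hmap (mu' m j) ^ n / (1 + mu' m j))) \<le> cmod (c j) * sqrt 2"
      by (simp only: norm_mult) (rule mult_left_mono[OF _ norm_ge_zero])
  next
    fix j assume j: "j \<in> A"
    have nz: "1 + mu j \<noteq> 0" using pos j Re_nonneg_ne by (simp add: less_imp_le)
    have lm: "(\<lambda>m. mu' m j) \<longlonglongrightarrow> mu j" unfolding mu'_def
      using tendsto_add[OF tendsto_const tendsto_of_real[OF elim]] by simp
    show "(\<lambda>m. c j * (complex_of_real (sqrt 2) * hmap (mu' m j) ^ n / (1 + mu' m j))) \<longlonglongrightarrow> c j * (complex_of_real (sqrt 2) * hmap (mu j) ^ n / (1 + mu j))"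
      unfolding hmap_def using nz by (intro tendsto_intros lm) auto
  qed
  have "Yv c mu A = (\<integral>\<^sup>+n. liminf (\<lambda>m. ennreal ((cmod (sq c (mu' m) A n))^2)) \<partial>count_space UNIV)"
    unfolding Ye
  proof (intro nn_integral_cong)
    fix n
    have "(\<lambda>m. ennreal ((cmod (sq c (mu' m) A n))^2)) \<longlonglongrightarrow> ennreal ((cmod (sq c mu A n))^2)"
      by (intro tendsto_ennrealI tendsto_intros sqconv)
    then show "ennreal ((cmod (sq c mu A n))^2) = liminf (\<lambda>m. ennreal ((cmod (sq c (mu' m) A n))^2))"
      by (rule lim_imp_Liminf[OF trivial_limit_sequentially, symmetric])
  qed
  also have "\<dots> \<le> liminf (\<lambda>m. \<integral>\<^sup>+n. ennreal ((cmod (sq c (mu' m) A n))^2) \<partial>count_space UNIV)"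
    by (rule nn_integral_liminf) simp
  also have "\<dots> = liminf (\<lambda>m. Xv c (mu' m) A)" unfolding nice Ye ..
  also have "\<dots> \<le> Xv c mu A" by (rule liminf_le_const[OF Xmono])
  finally show ?thesis .
qed

lemma L1: "cmod x < 1 \<Longrightarrow> 1 + x \<noteq> 0"
proof
  assume a: "cmod x < 1" "1 + x = 0"
  then have "x = -1" by (simp add: add_eq_0_iff)
  then show False using a by simp
qed

lemma L2: "cmod x \<le> \<rho> \<Longrightarrow> cmod (1 + x) \<ge> 1 - \<rho>"
proof -
  assume a: "cmod x \<le> \<rho>"
  have "cmod (1::complex) - cmod x \<le> cmod (1 + x)" by (metis norm_diff_ineq)
  then show ?thesis using a by simp
qed

lemma L2b: "cmod x \<le> 1 \<Longrightarrow> cmod (1 + x) \<le> 2"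
  using norm_triangle_ineq[of 1 x] by simp

lemma L3:
  assumes "cmod x \<le> \<rho>" "\<rho> < 1"
  shows "Re (hmap x) \<ge> (1 - \<rho>^2) / 4"
proof -
  have x1: "cmod x < 1" using assms by simp
  have nz: "1 + x \<noteq> 0" by (rule L1[OF x1])
  have p: "(cmod (1 + x))^2 > 0" using nz by simp
  have b4: "(cmod (1 + x))^2 \<le> 4"
  proof -
    have "cmod (1 + x) \<le> 2" using L2b x1 by simp
    then have "(cmod (1 + x))^2 \<le> 2^2" by (intro power_mono) auto
    then show ?thesis by simp
  qed
  have num: "1 - \<rho>^2 \<le> 1 - (cmod x)^2" using assms by (simp add: power_mono)
  have num0: "0 \<le> 1 - (cmod x)^2" using x1 by (simp add: power_le_one)
  have "(1 - \<rho>^2) / 4 \<le> (1 - (cmod x)^2) / 4" using num by simp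
  also have "\<dots> \<le> (1 - (cmod x)^2) / (cmod (1 + x))^2"
    using num0 p b4 by (intro divide_left_mono) auto
  finally show ?thesis using hmap_Re[OF nz] by simp
qed

lemma L4:
  assumes "cmod x \<le> \<rho>" "\<rho> < 1"
  shows "cmod (hmap x) \<le> 2 / (1 - \<rho>)"
proof -
  have x1: "cmod x \<le> 1" using assms by simp
  have a: "cmod (1 - x) \<le> 2" using norm_triangle_ineq4[of 1 x] x1 by simp
  have b: "cmod (1 + x) \<ge> 1 - \<rho>" by (rule L2[OF assms(1)])
  have "cmod (hmap x) = cmod (1 - x) / cmod (1 + x)" by (simp add: hmap_def norm_divide)
  also have "\<dots> \<le> 2 / (1 - \<rho>)" using a b assms(2) by (intro frac_le) auto
  finally show ?thesis .
qed

lemma L5: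
  assumes w: "cmod w < 1" and r: "0 < r" "r < 1"
  shows "cmod ((1 + w) / (1 + complex_of_real r * w)) \<le> 2"
proof -
  define x where "x = complex_of_real r * w"
  have xr: "cmod x \<le> r" using w r by (simp add: x_def norm_mult mult_left_le)
  have b: "cmod (1 + x) \<ge> 1 - r" by (rule L2[OF xr])
  have p: "cmod (1 + x) > 0" using b r by linarith
  have "1 + w = (1 + x) + complex_of_real (1 - r) * w" by (simp add: x_def algebra_simps)
  then have "cmod (1 + w) \<le> cmod (1 + x) + cmod (complex_of_real (1 - r) * w)"
    by (metis norm_triangle_ineq)
  also have "cmod (complex_of_real (1 - r) * w) \<le> 1 - r"
  proof -
    have n: "cmod (complex_of_real (1 - r)) = 1 - r" using r by (simp only: norm_of_real)
    have "cmod (complex_of_real (1 - r) * w) = (1 - r) * cmod w" by (simp only: norm_mult n)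
    also have "\<dots> \<le> 1 - r" using w r by (intro mult_left_le) auto
    finally show ?thesis .
  qed
  finally have "cmod (1 + w) \<le> 2 * cmod (1 + x)" using b by linarith
  then show ?thesis using p by (simp add: x_def[symmetric] norm_divide divide_le_eq)
qed

lemma X_le_Y:
  fixes c mu :: "'j \<Rightarrow> complex"
  assumes A: "countable A" and cs: "(\<lambda>j. cmod (c j)) summable_on A"
    and pos: "\<forall>j\<in>A. Re (mu j) > 0"
  shows "Xv c mu A \<le> Yv c mu A"
proof -
  define r where "r m = 1 - 1 / real (m + 2)" for m
  have r0: "0 < r m" for m by (simp add: r_def)
  have r1: "r m < 1" for m by (simp add: r_def)
  have rlim: "r \<longlonglongrightarrow> 1"
  proof -
    have "(\<lambda>m. 1 / real (m + 2)) \<longlonglongrightarrow> 0" by (rule LIMSEQ_ignore_initial_segment[OF lim_inverse_n'])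
    then have "(\<lambda>m. 1 - 1 / real (m + 2)) \<longlonglongrightarrow> 1 - 0" by (intro tendsto_intros)
    then show ?thesis by (simp add: r_def[abs_def])
  qed
  define w where "w j = hmap (mu j)" for j
  have wl: "cmod (w j) < 1" if "j \<in> A" for j using hmap_norm_lt1 pos that by (simp add: w_def)
  have nzm: "1 + mu j \<noteq> 0" if "j \<in> A" for j using pos that Re_nonneg_ne by (simp add: less_imp_le)
  have nzw: "1 + w j \<noteq> 0" if "j \<in> A" for j by (rule L1[OF wl[OF that]])
  have muw: "hmap (w j) = mu j" if "j \<in> A" for j unfolding w_def by (rule hmap_inv[OF nzm[OF that]])
  define x where "x m j = complex_of_real (r m) * w j" for m j
  have xr: "cmod (x m j) \<le> r m" if "j \<in> A" for m j
    using wl[OF that] r0[of m] by (simp add: x_def norm_mult mult_left_le)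
  have nzx: "1 + x m j \<noteq> 0" if "j \<in> A" for m j using xr[OF that, of m] r1[of m] by (intro L1) simp
  define nu where "nu m j = hmap (x m j)" for m j
  define dd where "dd m j = c j * ((1 + w j) / (1 + x m j))" for m j
  have ddb: "cmod (dd m j) \<le> 2 * cmod (c j)" if "j \<in> A" for m j
  proof -
    have "cmod ((1 + w j) / (1 + x m j)) \<le> 2" unfolding x_def by (rule L5[OF wl[OF that] r0 r1])
    then show ?thesis unfolding dd_def norm_mult by (metis mult.commute mult_left_mono norm_ge_zero)
  qed
  have dds: "(\<lambda>j. cmod (dd m j)) summable_on A" for m
    by (rule Infinite_Sum.abs_summable_on_comparison_test'[OF summable_on_cmult_right[OF cs] ddb])
  have nure: "Re (nu m j) \<ge> (1 - (r m)^2) / 4" if "j \<in> A" for m j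
    unfolding nu_def by (rule L3[OF xr[OF that] r1])
  have d0: "(1 - (r m)^2) / 4 > 0" for m proof -
    have "(r m)^2 < 1" using r0[of m] r1[of m] by (simp add: abs_square_less_1)
    then show ?thesis by simp
  qed
  have nure0: "Re (nu m j) \<ge> 0" if "j \<in> A" for m j using nure[OF that, of m] d0[of m] by linarith
  have nuM: "cmod (nu m j) \<le> 2 / (1 - r m)" if "j \<in> A" for m j
    unfolding nu_def by (rule L4[OF xr[OF that] r1])
  have nice: "Xv (dd m) (nu m) A = Yv (dd m) (nu m) A" for m
    by (rule nice_XY[OF A dds d0]) (use nure nuM in auto)
  have termeq: "dd m j * (complex_of_real (sqrt 2) * hmap (nu m j) ^ n / (1 + nu m j)) = complex_of_real (r m ^ n) * (c j * (complex_of_real (sqrt 2) * hmap (mu j) ^ n / (1 + mu j)))"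
    if j: "j \<in> A" for m j n
  proof -
    have e1: "hmap (nu m j) = x m j" unfolding nu_def by (rule hmap_inv[OF nzx[OF j]])
    have e2: "1 + nu m j = 2 / (1 + x m j)" unfolding nu_def by (rule hmap_one[OF nzx[OF j]])
    have e3: "hmap (mu j) = w j" by (simp add: w_def)
    have e4: "1 + mu j = 2 / (1 + w j)" using hmap_one[OF nzw[OF j]] muw[OF j] by simp
    have a: "1 + x m j \<noteq> 0" by (rule nzx[OF j])
    have b: "1 + w j \<noteq> 0" by (rule nzw[OF j])
    have alg: "\<And>C B (a::complex) S R W. a \<noteq> 0 \<Longrightarrow> B \<noteq> 0 \<Longrightarrow>
        C * (B / a) * (S * (R * W) ^ n / (2 / a)) = R ^ n * (C * (S * W ^ n / (2 / B)))"
      by (simp add: power_mult_distrib field_simps)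
    show ?thesis unfolding dd_def e1 e2 e3 e4 of_real_power
      using alg[OF a b, of "c j" "complex_of_real (sqrt 2)" "complex_of_real (r m)" "w j"]
      by (simp only: x_def)
  qed
  have sqe: "sq (dd m) (nu m) A n = complex_of_real (r m ^ n) * sq c mu A n" for m n
    unfolding sq_def
    by (subst infsum_cmult_right'[symmetric], rule infsum_cong) (rule termeq)
  have Ymono: "Yv (dd m) (nu m) A \<le> Yv c mu A" for m
    unfolding Ye
  proof (rule nn_integral_mono)
    fix n
    have "cmod (sq (dd m) (nu m) A n) = r m ^ n * cmod (sq c mu A n)"
      unfolding sqe using r0[of m] by (simp add: norm_mult norm_power)
    also have "\<dots> \<le> 1 * cmod (sq c mu A n)"
      using r0[of m] r1[of m] by (intro mult_right_mono power_le_one) auto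
    finally have "(cmod (sq (dd m) (nu m) A n))^2 \<le> (cmod (sq c mu A n))^2" by (intro power_mono) auto
    then show "ennreal ((cmod (sq (dd m) (nu m) A n))^2) \<le> ennreal ((cmod (sq c mu A n))^2)"
      by (rule ennreal_leI)
  qed
  have xlim: "(\<lambda>m. x m j) \<longlonglongrightarrow> w j" for j
  proof -
    have "(\<lambda>m. complex_of_real (r m) * w j) \<longlonglongrightarrow> complex_of_real 1 * w j"
      by (intro tendsto_intros rlim)
    then show ?thesis by (simp add: x_def[abs_def])
  qed
  have phiconv: "(\<lambda>m. phi (dd m) (nu m) A t) \<longlonglongrightarrow> phi c mu A t" if t: "t \<ge> 0" for t
    unfolding phi_def
  proof (rule infsum_dct[where b="\<lambda>j. 2 * cmod (c j)"])
    show "(\<lambda>j. 2 * cmod (c j)) summable_on A" by (rule summable_on_cmult_right[OF cs])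
  next
    fix m j assume j: "j \<in> A"
    have "cmod (exp ((- nu m j) * complex_of_real t)) \<le> exp (- 0 * t)"
      by (rule norm_exp_le[OF nure0[OF j] t])
    then have "cmod (dd m j) * cmod (exp ((- nu m j) * complex_of_real t)) \<le> cmod (dd m j) * 1"
      by (intro mult_left_mono) auto
    then show "norm (dd m j * exp ((- nu m j) * complex_of_real t)) \<le> 2 * cmod (c j)"
      using ddb[OF j, of m] by (simp add: norm_mult)
  next
    fix j assume j: "j \<in> A"
    have "(\<lambda>m. dd m j * exp ((- nu m j) * complex_of_real t)) \<longlonglongrightarrow> c j * ((1 + w j) / (1 + w j)) * exp ((- hmap (w j)) * complex_of_real t)"
      unfolding dd_def nu_def hmap_def using nzw[OF j] by (intro tendsto_intros xlim) auto
    then show "(\<lambda>m. dd m j * exp ((- nu m j) * complex_of_real t)) \<longlonglongrightarrow> c j * exp ((- mu j) * complex_of_real t)"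
      using nzw[OF j] muw[OF j] by simp
  qed
  have "Xv c mu A = (\<integral>\<^sup>+t. liminf (\<lambda>m. ennreal (indicator {0..} t * (cmod (phi (dd m) (nu m) A t))^2)) \<partial>lborel)"
    unfolding Xe
  proof (intro nn_integral_cong)
    fix t :: real
    have "(\<lambda>m. indicator {0..} t * (cmod (phi (dd m) (nu m) A t))^2) \<longlonglongrightarrow> indicator {0..} t * (cmod (phi c mu A t))^2"
    proof (cases "t \<ge> 0")
      case True then show ?thesis by (intro tendsto_intros phiconv)
    next
      case False then show ?thesis by simp
    qed
    then have "(\<lambda>m. ennreal (indicator {0..} t * (cmod (phi (dd m) (nu m) A t))^2)) \<longlonglongrightarrow> ennreal (indicator {0..} t * (cmod (phi c mu A t))^2)"
      by (rule tendsto_ennrealI)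
    then show "ennreal (indicator {0..} t * (cmod (phi c mu A t))^2) = liminf (\<lambda>m. ennreal (indicator {0..} t * (cmod (phi (dd m) (nu m) A t))^2))"
      by (rule lim_imp_Liminf[OF trivial_limit_sequentially, symmetric])
  qed
  also have "\<dots> \<le> liminf (\<lambda>m. \<integral>\<^sup>+t. ennreal (indicator {0..} t * (cmod (phi (dd m) (nu m) A t))^2) \<partial>lborel)"
  proof (rule nn_integral_liminf)
    fix m
    have "(\<lambda>t. indicator {0..} t * (cmod (phi (dd m) (nu m) A t))^2) \<in> borel_measurable borel"
      by (rule phi_meas_A[OF A dds]) (use nure0 in auto)
    then show "(\<lambda>t. ennreal (indicator {0..} t * (cmod (phi (dd m) (nu m) A t))^2)) \<in> borel_measurable lborel"
      by measurable
  qed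
  also have "\<dots> = liminf (\<lambda>m. Yv (dd m) (nu m) A)" unfolding nice[symmetric] Xe ..
  also have "\<dots> \<le> Yv c mu A" by (rule liminf_le_const[OF Ymono])
  finally show ?thesis .
qed

lemma exp_series_c: "(\<Sum>n. (complex_of_real t ^ n / of_nat (fact n)) * z ^ n) = exp (complex_of_real t * z)"
  unfolding exp_def by (simp add: scaleR_conv_of_real power_mult_distrib divide_inverse mult_ac)

lemma inner_exp:
  "l2_inner J f (expA lam t g) = phi (\<lambda>j. f j * cnj (g j)) (\<lambda>j. cnj (lam j)) J t"
  unfolding l2_inner_def expA_def phi_def exp_series_c
  by (intro infsum_cong) (simp add: cnj_exp' mult_ac)

lemma inner_B:
  "l2_inner J f (Bpow lam n (avec lam g)) = sq (\<lambda>j. f j * cnj (g j)) (\<lambda>j. cnj (lam j)) J n"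
  unfolding l2_inner_def Bpow_def avec_def sq_def
  by (intro infsum_cong) (simp add: hmap_cnj[symmetric] mult_ac)

lemma l2_prod_summable:
  assumes "f \<in> l2 J" "g \<in> l2 J"
  shows "(\<lambda>j. cmod (f j * cnj (g j))) summable_on J"
proof -
  have s: "(\<lambda>j. (cmod (f j))^2 + (cmod (g j))^2) summable_on J"
    using assms by (intro summable_on_add) (auto simp: l2_def)
  have b: "norm (f j * cnj (g j)) \<le> (cmod (f j))^2 + (cmod (g j))^2" for j
  proof -
    have "0 \<le> (cmod (f j) - cmod (g j))^2" by simp
    then have "2 * (cmod (f j) * cmod (g j)) \<le> (cmod (f j))^2 + (cmod (g j))^2"
      by (simp add: power2_eq_square algebra_simps)
    moreover have "0 \<le> cmod (f j) * cmod (g j)" by simp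
    ultimately have "cmod (f j) * cmod (g j) \<le> (cmod (f j))^2 + (cmod (g j))^2" by linarith
    then show ?thesis by (simp add: norm_mult)
  qed
  show ?thesis using Infinite_Sum.abs_summable_on_comparison_test'[OF s b] by simp
qed

theorem mainTheorem9:
  fixes J :: "'j set" and I :: "'i set" and lam :: "'j \<Rightarrow> complex"
    and g :: "'i \<Rightarrow> 'j \<Rightarrow> complex"
  assumes "countable J"
    and "countable I"
    and "bounded (lam ` J)"
    and "\<forall>j\<in>J. Re (lam j) > 0"
    and "\<forall>i\<in>I. g i \<in> l2 J"
  shows "semicont_frame J lam I g {0..} \<longleftrightarrow>
         is_frame J (I \<times> (UNIV :: nat set)) (\<lambda>(i, n). Bpow lam n (avec lam (g i)))"
proof -
  define mu where "mu j = cnj (lam j)" for j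
  have pos: "\<forall>j\<in>J. Re (mu j) > 0" using assms(4) by (simp add: mu_def)
  obtain M where M: "\<forall>x\<in>lam ` J. norm x \<le> M" using assms(3) by (auto simp: bounded_iff)
  have Mmu: "\<forall>j\<in>J. cmod (mu j) \<le> M" using M by (simp add: mu_def)
  have key: "(\<Sum>\<^sub>\<infinity>i\<in>I. \<integral>\<^sup>+ t\<in>{0..}. ennreal ((cmod (l2_inner J f (expA lam t (g i))))^2) \<partial>lborel)
     = (\<Sum>\<^sub>\<infinity>k\<in>I \<times> (UNIV :: nat set). ennreal ((cmod (l2_inner J f ((\<lambda>(i, n). Bpow lam n (avec lam (g i))) k)))^2))"
    if f: "f \<in> l2 J" for f
  proof -
    have "(\<Sum>\<^sub>\<infinity>k\<in>I \<times> (UNIV :: nat set). ennreal ((cmod (l2_inner J f ((\<lambda>(i, n). Bpow lam n (avec lam (g i))) k)))^2))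
       = (\<Sum>\<^sub>\<infinity>i\<in>I. \<Sum>\<^sub>\<infinity>n\<in>UNIV. ennreal ((cmod (l2_inner J f (Bpow lam n (avec lam (g i)))))^2))"
      by (subst ennreal_infsum_Sigma) simp
    also have "\<dots> = (\<Sum>\<^sub>\<infinity>i\<in>I. Yv (\<lambda>j. f j * cnj (g i j)) mu J)"
      unfolding Yv_def inner_B mu_def ..
    also have "\<dots> = (\<Sum>\<^sub>\<infinity>i\<in>I. Xv (\<lambda>j. f j * cnj (g i j)) mu J)"
    proof (rule infsum_cong)
      fix i assume i: "i \<in> I"
      have cs: "(\<lambda>j. cmod (f j * cnj (g i j))) summable_on J"
        by (rule l2_prod_summable[OF f]) (use assms(5) i in auto)
      show "Yv (\<lambda>j. f j * cnj (g i j)) mu J = Xv (\<lambda>j. f j * cnj (g i j)) mu J"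
        using Y_le_X[OF assms(1) cs pos Mmu] X_le_Y[OF assms(1) cs pos] by (rule antisym)
    qed
    also have "\<dots> = (\<Sum>\<^sub>\<infinity>i\<in>I. \<integral>\<^sup>+ t\<in>{0..}. ennreal ((cmod (l2_inner J f (expA lam t (g i))))^2) \<partial>lborel)"
      unfolding Xv_def inner_exp mu_def ..
    finally show ?thesis by simp
  qed
  show ?thesis unfolding semicont_frame_def is_frame_def using key by auto
qed

end
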